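(* Let $f(t)\in\mathcal{O}_{\mathbb{C}_p}[[t]]$ be a power series with $f(0)\in E_p$ and $f'(0)\in U_1$. Then there is a unique $\phi\in C(\mathbb{Z}_p,\mathbb{C}_p)$ such that, as formal power series, $$\exp(f(0))\exp\big(f(t)-f(0)\big)=\sum_{n=0}^\infty\phi(n)\frac{t^n}{n!}\;(=A(\phi)).$$
   Context: Fix a prime $p$; $\mathbb{C}_p$ is the completion of an algebraic closure of $\mathbb{Q}_p$ with $|p|=1/p$. $\mathcal{O}_{\mathbb{C}_p}=\{x\in\mathbb{C}_p:|x|\le1\}$, $U_1=\{x\in\mathbb{C}_p:|x-1|<1\}$, and $E_p=\{x\in\mathbb{C}_p:|x|<p^{-1/(p-1)}\}$, the domain of convergence of the exponential series $\exp$. Since $f(t)-f(0)$ has no constant term, $\exp(f(t)-f(0))$ is a well-defined formal power series. $C(\mathbb{Z}_p,\mathbb{C}_p)$ is the space of continuous functions $\mathbb{Z}_p\to\mathbb{C}_p$, and for such $\phi$, $A(\phi)=\sum_{n\ge0}\phi(n)t^n/n!$. *)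

theory Defs
  imports "HOL-Computational_Algebra.Computational_Algebra"
begin

text \<open>A model of C_p: a field of characteristic 0 with an absolute value v that is
non-archimedean, normalised by v p = 1/p, complete, algebraically closed, and in which the
algebraic numbers (algebraic closure of Q) are dense. Such a valued field is isometrically
isomorphic to C_p (the closure of Q is Q_p, the algebraic closure of Q_p inside it is dense,
so it is the completion of an algebraic closure of Q_p).\<close>

definition is_Cp :: "nat \<Rightarrow> ('a::field_char_0 \<Rightarrow> real) \<Rightarrow> bool" where
  "is_Cp p v \<longleftrightarrow>
     prime p \<and>
     (\<forall>x. v x \<ge> 0) \<and> (\<forall>x. v x = 0 \<longleftrightarrow> x = 0) \<and>
     (\<forall>x y. v (x * y) = v x * v y) \<and>
     (\<forall>x y. v (x + y) \<le> max (v x) (v y)) \<and>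
     v (of_nat p) = 1 / real p \<and>
     (\<forall>X::nat \<Rightarrow> 'a. (\<forall>e>0. \<exists>N. \<forall>m\<ge>N. \<forall>n\<ge>N. v (X m - X n) < e)
         \<longrightarrow> (\<exists>L. (\<lambda>n. v (X n - L)) \<longlonglongrightarrow> 0)) \<and>
     (\<forall>q::'a poly. degree q > 0 \<longrightarrow> (\<exists>z. poly q z = 0)) \<and>
     (\<forall>x e. e > 0 \<longrightarrow> (\<exists>y. algebraic y \<and> v (x - y) < e))"

definition Zp :: "('a::field_char_0 \<Rightarrow> real) \<Rightarrow> 'a set" where
  "Zp v = {x. \<forall>e>0. \<exists>n::int. v (x - of_int n) < e}"

definition v_continuous_on :: "('a::field_char_0 \<Rightarrow> real) \<Rightarrow> 'a set \<Rightarrow> ('a \<Rightarrow> 'a) \<Rightarrow> bool" where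
  "v_continuous_on v S g \<longleftrightarrow>
     (\<forall>x\<in>S. \<forall>e>0. \<exists>d>0. \<forall>y\<in>S. v (y - x) < d \<longrightarrow> v (g y - g x) < e)"

definition v_sums :: "('a::field_char_0 \<Rightarrow> real) \<Rightarrow> (nat \<Rightarrow> 'a) \<Rightarrow> 'a \<Rightarrow> bool" where
  "v_sums v a s \<longleftrightarrow> (\<lambda>N. v ((\<Sum>n<N. a n) - s)) \<longlonglongrightarrow> 0"

definition v_exp :: "('a::field_char_0 \<Rightarrow> real) \<Rightarrow> 'a \<Rightarrow> 'a" where
  "v_exp v x = (THE s. v_sums v (\<lambda>n. x ^ n / of_nat (fact n)) s)"

definition Amice :: "('a::field_char_0 \<Rightarrow> 'a) \<Rightarrow> 'a fps" where
  "Amice phi = Abs_fps (\<lambda>n. phi (of_nat n) / of_nat (fact n))"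

end

theory Submission
  imports Defs
begin
locale cpv =
  fixes p :: nat and v :: "'a::field_char_0 \<Rightarrow> real"
  assumes Cp: "is_Cp p v"
begin

lemma prime_p: "prime p" using Cp by (simp add: is_Cp_def)
lemma p_gt1: "p > 1" using prime_p prime_gt_1_nat by blast
lemma v_nonneg: "v x \<ge> 0" using Cp by (simp add: is_Cp_def)
lemma v_zero_iff: "v x = 0 \<longleftrightarrow> x = 0" using Cp by (simp add: is_Cp_def)
lemma v_mult: "v (x * y) = v x * v y" using Cp by (simp add: is_Cp_def)
lemma v_add: "v (x + y) \<le> max (v x) (v y)" using Cp by (simp add: is_Cp_def)
lemma v_p: "v (of_nat p) = 1 / real p" using Cp by (simp add: is_Cp_def)
lemma v_complete: "(\<forall>e>0. \<exists>N. \<forall>m\<ge>N. \<forall>n\<ge>N. v (X m - X n) < e)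
         \<Longrightarrow> (\<exists>L. (\<lambda>n. v (X n - L)) \<longlonglongrightarrow> 0)" using Cp by (simp add: is_Cp_def)

lemma v_0[simp]: "v 0 = 0" using v_zero_iff by simp
lemma v_1[simp]: "v 1 = 1"
proof -
  have "v 1 = v 1 * v 1" using v_mult[of 1 1] by simp
  moreover have "v 1 \<noteq> 0" using v_zero_iff by simp
  ultimately show ?thesis by (metis mult_cancel_left1)
qed
lemma v_minus1: "v (-1) = 1"
proof -
  have "v (-1) * v (-1) = 1" using v_mult[of "-1" "-1"] by simp
  then show ?thesis using v_nonneg[of "-1"]
    by (metis abs_of_nonneg abs_square_eq_1 power2_eq_square)
qed
lemma v_uminus[simp]: "v (- x) = v x"
  using v_mult[of "-1" x] v_minus1 by simp
lemma v_sym: "v (x - y) = v (y - x)"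
  by (metis minus_diff_eq v_uminus)
lemma v_diff: "v (x - y) \<le> max (v x) (v y)"
  using v_add[of x "-y"] by simp
lemma v_tri: "v (x - z) \<le> max (v (x - y)) (v (y - z))"
  using v_add[of "x - y" "y - z"] by simp
lemma v_divide: "v (x / y) = v x / v y"
proof (cases "y = 0")
  case True then show ?thesis by simp
next
  case False
  have "v x = v (x / y) * v y" using v_mult[of "x/y" y] False by simp
  moreover have "v y \<noteq> 0" using False v_zero_iff by simp
  ultimately show ?thesis by simp
qed
lemma v_power: "v (x ^ n) = v x ^ n"
  by (induction n) (simp_all add: v_mult)

lemma v_of_nat_le1: "v (of_nat n) \<le> 1"
proof (induction n)
  case 0 then show ?case by simp
next
  case (Suc n)
  have "v (of_nat n + 1) \<le> max (v (of_nat n)) (v 1)" by (rule v_add)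
  then show ?case using Suc by (simp add: ac_simps)
qed
lemma v_of_int_le1: "v (of_int z) \<le> 1"
proof (cases "z \<ge> 0")
  case True then show ?thesis using v_of_nat_le1[of "nat z"] by simp
next
  case False
  have "of_int z = - (of_nat (nat (-z)) :: 'a)" using False by simp
  then show ?thesis using v_of_nat_le1[of "nat (-z)"] by simp
qed

lemma v_sum_le:
  assumes "finite A" "\<And>x. x \<in> A \<Longrightarrow> v (f x) \<le> B" "B \<ge> 0"
  shows "v (sum f A) \<le> B"
  using assms
proof (induction A rule: finite_induct)
  case empty then show ?case by simp
next
  case (insert x F)
  have "v (sum f (insert x F)) \<le> max (v (f x)) (v (sum f F))"
    using insert by (simp add: v_add)
  moreover have "v (f x) \<le> B" "v (sum f F) \<le> B" using insert by auto
  ultimately show ?case by (meson max.bounded_iff max_less_iff_conj order_le_less_trans order_trans)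
qed

lemma v_sum_less:
  assumes "finite A" "\<And>x. x \<in> A \<Longrightarrow> v (f x) < B" "B > 0"
  shows "v (sum f A) < B"
  using assms
proof (induction A rule: finite_induct)
  case empty then show ?case by simp
next
  case (insert x F)
  have "v (sum f (insert x F)) \<le> max (v (f x)) (v (sum f F))"
    using insert by (simp add: v_add)
  moreover have "v (f x) < B" "v (sum f F) < B" using insert by auto
  ultimately show ?case by (meson max_less_iff_conj order_le_less_trans)
qed

lemma v_prod_le1:
  assumes "\<And>x. x \<in> A \<Longrightarrow> v (f x) \<le> 1"
  shows "v (prod f A) \<le> 1"
proof (cases "finite A")
  case True then show ?thesis using assms
  proof (induction A rule: finite_induct)
    case empty then show ?case by simp
  next
    case (insert x F)
    then have "v (f x) * v (prod f F) \<le> 1 * 1"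
      by (intro mult_mono) (auto simp: v_nonneg)
    then show ?case using insert by (simp add: v_mult)
  qed
next
  case False then show ?thesis by simp
qed

lemma v_of_nat_pdvd:
  assumes "p ^ e dvd N"
  shows "v (of_nat N :: 'a) \<le> (1 / real p) ^ e"
proof -
  obtain M where "N = p ^ e * M" using assms by blast
  then have "v (of_nat N :: 'a) = (1 / real p) ^ e * v (of_nat M)"
    by (simp add: v_mult v_power v_p)
  also have "\<dots> \<le> (1 / real p) ^ e * 1"
    by (intro mult_left_mono v_of_nat_le1) simp
  finally show ?thesis by simp
qed

lemma p_pow_dvd_fact: "p ^ (n div p) dvd fact n"
proof (induction n)
  case 0 then show ?case by simp
next
  case (Suc n)
  show ?case
  proof (cases "p dvd Suc n")
    case True
    then have "Suc n div p = n div p + 1" using p_gt1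
      by (simp add: div_Suc dvd_eq_mod_eq_0)
    have "p * p ^ (n div p) dvd Suc n * fact n" by (rule mult_dvd_mono[OF True Suc.IH])
    then show ?thesis using \<open>Suc n div p = n div p + 1\<close> by (simp add: fact_Suc)
  next
    case False
    then have "Suc n div p = n div p" using p_gt1
      by (simp add: div_Suc dvd_eq_mod_eq_0)
    then show ?thesis using Suc by (simp add: dvd_mult)
  qed
qed

end

lemma fps_ode_unique:
  fixes F G D :: "'a::field_char_0 fps"
  assumes "fps_deriv F = F * D" "fps_deriv G = G * D" "F $ 0 = G $ 0"
  shows "F = G"
proof -
  define H where "H = F - G"
  have dH: "fps_deriv H = H * D" using assms unfolding H_def by (simp add: algebra_simps)
  have "H $ n = 0" for n
  proof (induction n rule: less_induct)
    case (less n)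
    show ?case
    proof (cases n)
      case 0 then show ?thesis using assms(3) by (simp add: H_def)
    next
      case (Suc m)
      have "fps_deriv H $ m = (H * D) $ m" using dH by simp
      also have "\<dots> = (\<Sum>i=0..m. H$i * D$(m - i))" by (rule fps_mult_nth)
      also have "\<dots> = 0" using less Suc by (intro sum.neutral) auto
      finally have "of_nat (m + 1) * H $ (m + 1) = 0" by simp
      then show ?thesis using Suc by (simp del: of_nat_Suc)
    qed
  qed
  then show ?thesis unfolding H_def by (simp add: fps_eq_iff)
qed

lemma exp_split:
  fixes u :: "'a::field_char_0 fps"
  assumes u0: "u $ 0 = 0"
  shows "fps_exp 1 oo u = fps_exp 1 * (fps_exp 1 oo (u - fps_X))"
proof (rule fps_ode_unique[where D = "fps_deriv u"])
  show "fps_deriv (fps_exp 1 oo u) = (fps_exp 1 oo u) * fps_deriv u"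
    using fps_compose_deriv[OF u0, of "fps_exp 1"] by simp
  have w0: "(u - fps_X) $ 0 = 0" using u0 by simp
  define C where "C = fps_exp (1::'a) oo (u - fps_X)"
  have dC: "fps_deriv C = C * (fps_deriv u - 1)"
    using fps_compose_deriv[OF w0, of "fps_exp 1"] by (simp add: C_def)
  have "fps_deriv (fps_exp 1 * C) = fps_exp 1 * C + fps_exp 1 * fps_deriv C"
    by (simp add: fps_deriv_mult)
  also have "\<dots> = fps_exp 1 * C * fps_deriv u" unfolding dC by (simp add: algebra_simps)
  finally show "fps_deriv (fps_exp 1 * (fps_exp 1 oo (u - fps_X))) =
      fps_exp 1 * (fps_exp 1 oo (u - fps_X)) * fps_deriv u" by (simp add: C_def)
  show "(fps_exp 1 oo u) $ 0 = (fps_exp 1 * (fps_exp 1 oo (u - fps_X))) $ 0" by simp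
qed

lemma div_add_le: "p > 0 \<Longrightarrow> (a + b) div p \<le> a div p + (b::nat)"
proof -
  assume p: "p > 0"
  have "a = a div p * p + a mod p" by simp
  moreover have "a mod p < p" using p by simp
  moreover have "b \<le> b * p" using p by simp
  ultimately have "a + b < a div p * p + b * p + p" by linarith
  then have "a + b < (a div p + b + 1) * p" by (simp add: algebra_simps)
  then have "(a + b) div p < a div p + b + 1" using p by (simp add: div_less_iff_less_mult)
  then show ?thesis by simp
qed

context cpv begin

lemma v_fact_ratio:
  assumes "i \<le> k"
  shows "v (fact k / fact i :: 'a) \<le> (1 / real p) ^ ((k - i) div p)"
proof -
  have "(fact k / fact i :: 'a) = of_nat (k choose i) * fact (k - i)"
    using binomial_fact[OF assms, where 'a='a] by (simp add: field_simps)
  then have "v (fact k / fact i :: 'a) = v (of_nat (k choose i)) * v (of_nat (fact (k - i)))"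
    by (simp add: v_mult)
  also have "\<dots> \<le> 1 * (1 / real p) ^ ((k - i) div p)"
    by (intro mult_mono v_of_nat_le1 v_of_nat_pdvd p_pow_dvd_fact) (auto simp: v_nonneg)
  finally show ?thesis by simp
qed

lemma v_falling_diff:
  assumes "v x \<le> 1" "v y \<le> 1"
  shows "v ((\<Prod>i=0..<k. x - of_nat i) - (\<Prod>i=0..<k. y - of_nat i)) \<le> v (x - y)"
proof (induction k)
  case 0 then show ?case by (simp add: v_nonneg)
next
  case (Suc k)
  define Px where "Px = (\<Prod>i=0..<k. x - of_nat i)"
  define Py where "Py = (\<Prod>i=0..<k. y - of_nat i)"
  have Py1: "v Py \<le> 1" unfolding Py_def
    by (rule v_prod_le1) (meson assms(2) order_trans max.bounded_iff v_diff v_of_nat_le1)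
  have x1: "v (x - of_nat k) \<le> 1"
    by (meson assms(1) order_trans max.bounded_iff v_diff v_of_nat_le1)
  have eq: "Px * (x - of_nat k) - Py * (y - of_nat k) = (Px - Py) * (x - of_nat k) + Py * (x - y)"
    by (simp add: algebra_simps)
  have "v ((Px - Py) * (x - of_nat k)) \<le> v (x - y)"
  proof -
    have "v ((Px - Py) * (x - of_nat k)) = v (Px - Py) * v (x - of_nat k)" by (rule v_mult)
    also have "\<dots> \<le> v (x - y) * 1"
      using Suc.IH x1 unfolding Px_def Py_def by (intro mult_mono) (auto simp: v_nonneg)
    finally show ?thesis by simp
  qed
  moreover have "v (Py * (x - y)) \<le> v (x - y)"
  proof -
    have "v (Py * (x - y)) = v Py * v (x - y)" by (rule v_mult)
    also have "\<dots> \<le> 1 * v (x - y)" using Py1 by (intro mult_mono) (auto simp: v_nonneg)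
    finally show ?thesis by simp
  qed
  ultimately have "v (Px * (x - of_nat k) - Py * (y - of_nat k)) \<le> v (x - y)"
    unfolding eq by (meson max.bounded_iff order_trans v_add)
  then show ?case by (simp add: Px_def Py_def)
qed

lemma v_binom_diff:
  "v (fact k :: 'a) * v (of_nat (n choose k) - of_nat (m choose k)) \<le> v (of_nat n - of_nat m :: 'a)"
proof -
  have "(fact k :: 'a) * (of_nat (n choose k) - of_nat (m choose k)) =
     (\<Prod>i=0..<k. of_nat n - of_nat i) - (\<Prod>i=0..<k. of_nat m - of_nat i)"
    by (simp add: binomial_gbinomial gbinomial_mult_fact right_diff_distrib)
  then have "v (fact k :: 'a) * v (of_nat (n choose k) - of_nat (m choose k)) =
     v ((\<Prod>i=0..<k. of_nat n - of_nat i) - (\<Prod>i=0..<k. (of_nat m :: 'a) - of_nat i))"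
    by (metis v_mult)
  also have "\<dots> \<le> v (of_nat n - of_nat m :: 'a)"
    by (rule v_falling_diff) (simp_all add: v_of_nat_le1)
  finally show ?thesis .
qed

lemma v_wpow:
  fixes w :: "'a fps" and \<mu> :: real
  assumes w0: "w $ 0 = 0" and w1: "v (w $ 1) \<le> \<mu>" and wj: "\<And>j. v (w $ j) \<le> 1"
    and mu0: "0 \<le> \<mu>" and mu1: "\<mu> \<le> 1"
  shows "v ((w ^ i) $ k) \<le> \<mu> ^ (2 * i - k)"
proof (induction i arbitrary: k)
  case 0
  show ?case by (cases "k = 0") simp_all
next
  case (Suc i)
  have "(w ^ Suc i) $ k = (\<Sum>j=0..k. w $ j * (w ^ i) $ (k - j))"
    by (simp add: fps_mult_nth)
  also have "v \<dots> \<le> \<mu> ^ (2 * Suc i - k)"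
  proof (rule v_sum_le)
    fix j assume j: "j \<in> {0..k}"
    show "v (w $ j * (w ^ i) $ (k - j)) \<le> \<mu> ^ (2 * Suc i - k)"
    proof (cases "j = 0")
      case True then show ?thesis using w0 mu0 by simp
    next
      case False
      show ?thesis
      proof (cases "j = 1")
        case True
        have "v (w $ j * (w ^ i) $ (k - j)) \<le> \<mu> * \<mu> ^ (2 * i - (k - 1))"
          unfolding v_mult using True w1 mu0 Suc.IH[of "k - 1"] by (intro mult_mono) (auto simp: v_nonneg)
        also have "\<dots> = \<mu> ^ (Suc (2 * i - (k - 1)))" by simp
        also have "\<dots> \<le> \<mu> ^ (2 * Suc i - k)"
          by (rule power_decreasing) (use mu0 mu1 True j in auto)
        finally show ?thesis .
      next
        case False
        have "v (w $ j * (w ^ i) $ (k - j)) \<le> 1 * \<mu> ^ (2 * i - (k - j))"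
          unfolding v_mult using wj[of j] Suc.IH[of "k - j"] by (intro mult_mono) (auto simp: v_nonneg)
        also have "\<dots> \<le> \<mu> ^ (2 * Suc i - k)"
          using False \<open>j \<noteq> 0\<close> j by simp (rule power_decreasing, use mu0 mu1 in auto)
        finally show ?thesis .
      qed
    qed
  qed (use mu0 in auto)
  finally show ?case .
qed

end

context cpv begin

lemma v_c_bound:
  fixes w :: "'a fps" and \<mu> :: real
  assumes w0: "w $ 0 = 0" and w1: "v (w $ 1) \<le> \<mu>" and wj: "\<And>j. v (w $ j) \<le> 1"
    and mup: "1 / real p \<le> \<mu>" and mu1: "\<mu> \<le> 1"
  shows "v (fact k * (fps_exp 1 oo w) $ k) \<le> \<mu> ^ ((k div 2) div p)"
proof -
  have mu0: "0 \<le> \<mu>" using mup by (smt (verit) divide_nonneg_nonneg of_nat_0_le_iff)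
  have "fact k * (fps_exp 1 oo w) $ k = (\<Sum>i=0..k. (fact k / fact i) * (w ^ i) $ k)"
    by (simp add: fps_compose_nth sum_distrib_left)
  also have "v \<dots> \<le> \<mu> ^ ((k div 2) div p)"
  proof (rule v_sum_le)
    fix i assume i: "i \<in> {0..k}"
    then have ik: "i \<le> k" by simp
    have "v ((fact k / fact i) * (w ^ i) $ k) \<le> (1 / real p) ^ ((k - i) div p) * \<mu> ^ (2 * i - k)"
      unfolding v_mult using v_fact_ratio[OF ik] v_wpow[OF w0 w1 wj mu0 mu1, of i k]
      by (intro mult_mono) (auto simp: v_nonneg)
    also have "\<dots> \<le> \<mu> ^ ((k - i) div p) * \<mu> ^ (2 * i - k)"
      using mup mu0 by (intro mult_right_mono power_mono) auto
    also have "\<dots> = \<mu> ^ ((k - i) div p + (2 * i - k))" by (simp add: power_add)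
    also have "\<dots> \<le> \<mu> ^ ((k div 2) div p)"
    proof (rule power_decreasing)
      have "k div 2 \<le> (k - i) + (2 * i - k)" using ik by arith
      then have "(k div 2) div p \<le> ((k - i) + (2 * i - k)) div p" by (rule div_le_mono)
      also have "\<dots> \<le> (k - i) div p + (2 * i - k)" using p_gt1 by (intro div_add_le) simp
      finally show "(k div 2) div p \<le> (k - i) div p + (2 * i - k)" .
    qed (use mu0 mu1 in auto)
    finally show "v ((fact k / fact i) * (w ^ i) $ k) \<le> \<mu> ^ ((k div 2) div p)" .
  qed (use mu0 in auto)
  finally show ?thesis .
qed

lemma v_fact_pos: "v (fact k :: 'a) > 0"
  using v_nonneg[of "fact k"] v_zero_iff[of "fact k"] by (simp add: less_le)

lemma v_fact_mono: "k \<le> K \<Longrightarrow> v (fact K :: 'a) \<le> v (fact k :: 'a)"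
proof -
  assume kK: "k \<le> K"
  have "(fact K :: 'a) = fact k * (fact K / fact k)" by simp
  then have "v (fact K :: 'a) = v (fact k :: 'a) * v (fact K / fact k :: 'a)" by (metis v_mult)
  also have "\<dots> \<le> v (fact k :: 'a) * 1"
  proof (rule mult_left_mono)
    have "v (fact K / fact k :: 'a) \<le> (1 / real p) ^ ((K - k) div p)" by (rule v_fact_ratio[OF kK])
    also have "\<dots> \<le> 1" using p_gt1 by (intro power_le_one) auto
    finally show "v (fact K / fact k :: 'a) \<le> 1" .
  qed (simp add: v_nonneg)
  finally show ?thesis by simp
qed

lemma mahler_uc:
  fixes c :: "nat \<Rightarrow> 'a"
  assumes c1: "\<And>k. v (c k) \<le> 1"
    and c0: "\<And>e. e > 0 \<Longrightarrow> \<exists>K. \<forall>k\<ge>K. v (c k) < e"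
  shows "\<forall>e>0. \<exists>d>0. \<forall>n m. v (of_nat n - of_nat m :: 'a) < d \<longrightarrow>
     v ((\<Sum>k=0..n. of_nat (n choose k) * c k) - (\<Sum>k=0..m. of_nat (m choose k) * c k)) < e"
proof (intro allI impI)
  fix e :: real assume e: "e > 0"
  obtain K where K: "\<And>k. k \<ge> K \<Longrightarrow> v (c k) < e" using c0[OF e] by blast
  define d where "d = e * v (fact K :: 'a)"
  have d: "d > 0" unfolding d_def using e v_fact_pos by simp
  show "\<exists>d>0. \<forall>n m. v (of_nat n - of_nat m :: 'a) < d \<longrightarrow>
     v ((\<Sum>k=0..n. of_nat (n choose k) * c k) - (\<Sum>k=0..m. of_nat (m choose k) * c k)) < e"
  proof (intro exI[of _ d] conjI allI impI d)
    fix n m assume nm: "v (of_nat n - of_nat m :: 'a) < d"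
    define N where "N = n + m + 1"
    have ext: "(\<Sum>k=0..n. of_nat (n choose k) * c k) = (\<Sum>k<N. of_nat (n choose k) * c k)"
      if "n < N" for n
    proof (rule sum.mono_neutral_left)
      show "\<forall>i\<in>{..<N} - {0..n}. of_nat (n choose i) * c i = 0" by auto
    qed (use that in auto)
    have "(\<Sum>k=0..n. of_nat (n choose k) * c k) - (\<Sum>k=0..m. of_nat (m choose k) * c k)
        = (\<Sum>k<N. (of_nat (n choose k) - of_nat (m choose k)) * c k)"
      using ext[of n] ext[of m] unfolding N_def by (simp add: sum_subtractf left_diff_distrib)
    also have "v \<dots> < e"
    proof (rule v_sum_less)
      fix k assume "k \<in> {..<N}"
      have b1: "v (of_nat (n choose k) - of_nat (m choose k) :: 'a) \<le> 1"
        by (meson max.bounded_iff order_trans v_diff v_of_nat_le1)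
      show "v ((of_nat (n choose k) - of_nat (m choose k)) * c k) < e"
      proof (cases "k \<ge> K")
        case True
        have "v ((of_nat (n choose k) - of_nat (m choose k)) * c k) \<le> 1 * v (c k)"
          unfolding v_mult using b1 by (intro mult_right_mono) (auto simp: v_nonneg)
        then show ?thesis using K[OF True] by simp
      next
        case False
        have fk: "v (fact k :: 'a) > 0" by (rule v_fact_pos)
        have "v (fact k :: 'a) * v (of_nat (n choose k) - of_nat (m choose k) :: 'a) < d"
          using v_binom_diff[of k n m] nm by simp
        also have "d \<le> e * v (fact k :: 'a)"
          unfolding d_def using e False by (intro mult_left_mono v_fact_mono) auto
        finally have "v (of_nat (n choose k) - of_nat (m choose k) :: 'a) < e"
          using fk by (simp add: mult.commute)
        moreover have "v ((of_nat (n choose k) - of_nat (m choose k)) * c k) \<le>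
            v (of_nat (n choose k) - of_nat (m choose k) :: 'a) * 1"
          unfolding v_mult using c1 by (intro mult_left_mono) (auto simp: v_nonneg)
        ultimately show ?thesis by simp
      qed
    qed (use e in auto)
    finally show "v ((\<Sum>k=0..n. of_nat (n choose k) * c k) - (\<Sum>k=0..m. of_nat (m choose k) * c k)) < e" .
  qed
qed

end

context cpv begin

lemma of_nat_in_Zp: "(of_nat n :: 'a) \<in> Zp v"
  unfolding Zp_def by (auto intro!: exI[of _ "int n"])

lemma density:
  assumes x: "x \<in> Zp v" and d: "d > 0"
  shows "\<exists>n. v (x - of_nat n) < d"
proof -
  obtain z :: int where z: "v (x - of_int z) < d" using x d unfolding Zp_def by blast
  obtain K where K: "(1 / real p) ^ K < d" using real_arch_pow_inv[OF d, of "1 / real p"] p_gt1 by auto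
  have pK: "1 \<le> int p ^ K" using p_gt1 by (intro one_le_power) simp
  have nn: "z + int (p ^ K) * \<bar>z\<bar> \<ge> 0"
  proof -
    have "int (p ^ K) * \<bar>z\<bar> \<ge> 1 * \<bar>z\<bar>" using pK by (intro mult_right_mono) auto
    then show ?thesis by linarith
  qed
  define n where "n = nat (z + int (p ^ K) * \<bar>z\<bar>)"
  have "(of_nat n :: 'a) = of_int (z + int (p ^ K) * \<bar>z\<bar>)"
    unfolding n_def using nn by (metis int_nat_eq of_int_of_nat_eq)
  also have "\<dots> = of_int z + of_nat (p ^ K) * of_int \<bar>z\<bar>" by simp
  finally have eq: "x - of_nat n = (x - of_int z) - of_nat (p ^ K) * of_int \<bar>z\<bar>" by simp
  have "v (of_nat (p ^ K) * (of_int \<bar>z\<bar> :: 'a)) \<le> (1 / real p) ^ K * 1"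
    unfolding v_mult using v_of_nat_pdvd[of K "p ^ K"] v_of_int_le1[of "\<bar>z\<bar>"]
    by (intro mult_mono) (auto simp: v_nonneg)
  moreover have "v (x - of_nat n) \<le> max (v (x - of_int z)) (v (of_nat (p ^ K) * (of_int \<bar>z\<bar> :: 'a)))"
    unfolding eq by (rule v_diff)
  ultimately have "v (x - of_nat n) < d" using z K by simp
  then show ?thesis by blast
qed

definition lim_at :: "(nat \<Rightarrow> 'a) \<Rightarrow> 'a \<Rightarrow> 'a \<Rightarrow> bool" where
  "lim_at G x L \<longleftrightarrow> (\<forall>e>0. \<exists>d>0. \<forall>n. v (x - of_nat n) < d \<longrightarrow> v (G n - L) < e)"

lemma lim_at_exists:
  assumes uc: "\<forall>e>0. \<exists>d>0. \<forall>n m. v (of_nat n - of_nat m :: 'a) < d \<longrightarrow> v (G n - G m) < e"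
    and x: "x \<in> Zp v"
  shows "\<exists>L. lim_at G x L"
proof -
  define ns where "ns j = (SOME n. v (x - of_nat n) < inverse (of_nat (Suc j)))" for j
  have ns: "v (x - of_nat (ns j)) < inverse (of_nat (Suc j))" for j
    unfolding ns_def by (rule someI_ex) (rule density[OF x], simp)
  have ns_close: "\<exists>N. \<forall>j\<ge>N. v (x - of_nat (ns j)) < d" if d: "d > 0" for d
  proof -
    obtain N where N: "inverse (of_nat (Suc N)) < d" using reals_Archimedean[OF d] by blast
    have "v (x - of_nat (ns j)) < d" if "j \<ge> N" for j
    proof -
      have "inverse (real (Suc j)) \<le> inverse (of_nat (Suc N))"
        using that by (intro le_imp_inverse_le) auto
      then show ?thesis using ns[of j] N by linarith
    qed
    then show ?thesis by blast
  qed
  have "\<forall>e>0. \<exists>N. \<forall>a\<ge>N. \<forall>b\<ge>N. v (G (ns a) - G (ns b)) < e"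
  proof (intro allI impI)
    fix e :: real assume e: "e > 0"
    obtain d where d: "d > 0" and dd: "\<And>n m. v (of_nat n - of_nat m :: 'a) < d \<Longrightarrow> v (G n - G m) < e"
      using uc e by blast
    obtain N where N: "\<And>j. j \<ge> N \<Longrightarrow> v (x - of_nat (ns j)) < d" using ns_close[OF d] by blast
    have "v (G (ns a) - G (ns b)) < e" if "a \<ge> N" "b \<ge> N" for a b
    proof (rule dd)
      have "v (of_nat (ns a) - of_nat (ns b) :: 'a) \<le> max (v (of_nat (ns a) - x)) (v (x - of_nat (ns b)))"
        by (rule v_tri)
      then show "v (of_nat (ns a) - of_nat (ns b) :: 'a) < d"
        using N[OF that(1)] N[OF that(2)] v_sym[of x "of_nat (ns a)"] by simp
    qed
    then show "\<exists>N. \<forall>a\<ge>N. \<forall>b\<ge>N. v (G (ns a) - G (ns b)) < e" by blast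
  qed
  then obtain L where L: "(\<lambda>j. v (G (ns j) - L)) \<longlonglongrightarrow> 0" using v_complete[of "\<lambda>j. G (ns j)"] by blast
  have "lim_at G x L" unfolding lim_at_def
  proof (intro allI impI)
    fix e :: real assume e: "e > 0"
    obtain d where d: "d > 0" and dd: "\<And>n m. v (of_nat n - of_nat m :: 'a) < d \<Longrightarrow> v (G n - G m) < e"
      using uc e by blast
    have ev1: "eventually (\<lambda>j. v (G (ns j) - L) < e) sequentially"
      using order_tendstoD(2)[OF L e] by simp
    obtain N where N: "\<And>j. j \<ge> N \<Longrightarrow> v (x - of_nat (ns j)) < d" using ns_close[OF d] by blast
    have ev2: "eventually (\<lambda>j. v (x - of_nat (ns j)) < d) sequentially"
      using N by (auto simp: eventually_sequentially)
    obtain j where j1: "v (G (ns j) - L) < e" and j2: "v (x - of_nat (ns j)) < d"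
      using eventually_happens[OF eventually_conj[OF ev1 ev2]] by auto
    show "\<exists>d>0. \<forall>n. v (x - of_nat n) < d \<longrightarrow> v (G n - L) < e"
    proof (intro exI[of _ d] conjI allI impI d)
      fix n assume n: "v (x - of_nat n) < d"
      have "v (of_nat n - of_nat (ns j) :: 'a) \<le> max (v (of_nat n - x)) (v (x - of_nat (ns j)))"
        by (rule v_tri)
      then have "v (of_nat n - of_nat (ns j) :: 'a) < d" using n j2 v_sym[of x "of_nat n"] by simp
      then have "v (G n - G (ns j)) < e" by (rule dd)
      moreover have "v (G n - L) \<le> max (v (G n - G (ns j))) (v (G (ns j) - L))" by (rule v_tri)
      ultimately show "v (G n - L) < e" using j1 by simp
    qed
  qed
  then show ?thesis by blast
qed

lemma lim_at_nat:
  assumes "lim_at G (of_nat n) L"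
  shows "L = G n"
proof -
  have "v (G n - L) < e" if "e > 0" for e
    using assms that unfolding lim_at_def by fastforce
  then have "v (G n - L) = 0" using v_nonneg[of "G n - L"] by (metis less_irrefl less_le)
  then show ?thesis using v_zero_iff by simp
qed

lemma extension:
  assumes uc: "\<forall>e>0. \<exists>d>0. \<forall>n m. v (of_nat n - of_nat m :: 'a) < d \<longrightarrow> v (G n - G m) < e"
  shows "\<exists>phi. v_continuous_on v (Zp v) phi \<and> (\<forall>n. phi (of_nat n) = G n)"
proof -
  define phi where "phi x = (SOME L. lim_at G x L)" for x
  have phi: "lim_at G x (phi x)" if "x \<in> Zp v" for x
    unfolding phi_def by (rule someI_ex) (rule lim_at_exists[OF uc that])
  have "phi (of_nat n) = G n" for n using lim_at_nat phi[OF of_nat_in_Zp] by blast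
  moreover have "v_continuous_on v (Zp v) phi" unfolding v_continuous_on_def
  proof (intro ballI allI impI)
    fix x e assume x: "x \<in> Zp v" and e: "(e::real) > 0"
    obtain d where d: "d > 0" and dd: "\<And>n m. v (of_nat n - of_nat m :: 'a) < d \<Longrightarrow> v (G n - G m) < e"
      using uc e by blast
    show "\<exists>d>0. \<forall>y\<in>Zp v. v (y - x) < d \<longrightarrow> v (phi y - phi x) < e"
    proof (intro exI[of _ d] conjI ballI impI d)
      fix y assume y: "y \<in> Zp v" and xy: "v (y - x) < d"
      obtain dx where dx: "dx > 0" "\<And>n. v (x - of_nat n) < dx \<Longrightarrow> v (G n - phi x) < e"
        using phi[OF x] e unfolding lim_at_def by blast
      obtain dy where dy: "dy > 0" "\<And>n. v (y - of_nat n) < dy \<Longrightarrow> v (G n - phi y) < e"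
        using phi[OF y] e unfolding lim_at_def by blast
      obtain n where n: "v (x - of_nat n) < min dx d" using density[OF x, of "min dx d"] dx d by auto
      obtain m where m: "v (y - of_nat m) < min dy d" using density[OF y, of "min dy d"] dy d by auto
      have "v (of_nat m - of_nat n :: 'a) \<le> max (v (of_nat m - y)) (v (y - of_nat n))" by (rule v_tri)
      moreover have "v (y - of_nat n) \<le> max (v (y - x)) (v (x - of_nat n))" by (rule v_tri)
      ultimately have "v (of_nat m - of_nat n :: 'a) < d"
        using n m xy v_sym[of y "of_nat m"] by (metis max_less_iff_conj min_less_iff_conj order_le_less_trans)
      then have "v (G m - G n) < e" by (rule dd)
      moreover have "v (G n - phi x) < e" using dx n by simp
      moreover have "v (G m - phi y) < e" using dy m by simp
      moreover have "v (phi y - phi x) \<le> max (v (phi y - G m)) (v (G m - phi x))" by (rule v_tri)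
      moreover have "v (G m - phi x) \<le> max (v (G m - G n)) (v (G n - phi x))" by (rule v_tri)
      ultimately show "v (phi y - phi x) < e" using v_sym[of "phi y" "G m"] by simp
    qed
  qed
  ultimately show ?thesis by blast
qed

lemma unique_ext:
  assumes "v_continuous_on v (Zp v) phi" "v_continuous_on v (Zp v) psi"
    and "\<And>n. phi (of_nat n) = psi (of_nat n)" and x: "x \<in> Zp v"
  shows "phi x = psi x"
proof -
  have "v (phi x - psi x) < e" if e: "e > 0" for e
  proof -
    obtain d1 where d1: "d1 > 0" "\<And>y. y \<in> Zp v \<Longrightarrow> v (y - x) < d1 \<Longrightarrow> v (phi y - phi x) < e"
      using assms(1) x e unfolding v_continuous_on_def by blast
    obtain d2 where d2: "d2 > 0" "\<And>y. y \<in> Zp v \<Longrightarrow> v (y - x) < d2 \<Longrightarrow> v (psi y - psi x) < e"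
      using assms(2) x e unfolding v_continuous_on_def by blast
    obtain n where n: "v (x - of_nat n) < min d1 d2" using density[OF x, of "min d1 d2"] d1 d2 by auto
    have "v (of_nat n - x) < d1" "v (of_nat n - x) < d2" using n v_sym[of x "of_nat n"] by auto
    then have "v (phi (of_nat n) - phi x) < e" "v (psi (of_nat n) - psi x) < e"
      using d1 d2 of_nat_in_Zp by auto
    moreover have "v (phi x - psi x) \<le> max (v (phi x - phi (of_nat n))) (v (psi (of_nat n) - psi x))"
      using v_tri[of "phi x" "psi x" "phi (of_nat n)"] assms(3)[of n] by simp
    ultimately show ?thesis using v_sym[of "phi x" "phi (of_nat n)"] by simp
  qed
  then have "v (phi x - psi x) = 0" using v_nonneg[of "phi x - psi x"] by (metis less_irrefl less_le)
  then show ?thesis using v_zero_iff by simp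
qed

end

lemma E_coeff:
  fixes C :: "'a::field_char_0 fps"
  shows "fact n * (fps_exp 1 * C) $ n = (\<Sum>k=0..n. of_nat (n choose k) * (fact k * C $ k))"
proof -
  have "(fps_exp 1 * C) $ n = (C * fps_exp 1) $ n" by (simp add: mult.commute)
  also have "\<dots> = (\<Sum>k=0..n. C $ k * (1 / fact (n - k)))" by (simp add: fps_mult_nth)
  finally have "fact n * (fps_exp 1 * C) $ n = (\<Sum>k=0..n. fact n * (C $ k * (1 / fact (n - k))))"
    by (simp add: sum_distrib_left)
  also have "\<dots> = (\<Sum>k=0..n. of_nat (n choose k) * (fact k * C $ k))"
  proof (rule sum.cong)
    fix k assume "k \<in> {0..n}"
    then have kn: "k \<le> n" by simp
    show "fact n * (C $ k * (1 / fact (n - k))) = of_nat (n choose k) * (fact k * C $ k)"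
      unfolding binomial_fact[OF kn] by (simp add: field_simps)
  qed simp
  finally show ?thesis .
qed

theorem proposition5p2:
  fixes p :: nat and v :: "'a::field_char_0 \<Rightarrow> real" and f :: "'a fps"
  assumes Cp: "is_Cp p v"
    and O: "\<forall>n. v (fps_nth f n) \<le> 1"
    and E: "v (fps_nth f 0) < real p powr (- 1 / (real p - 1))"
    and U: "v (fps_nth f 1 - 1) < 1"
  shows "(\<exists>phi. v_continuous_on v (Zp v) phi \<and>
           fps_const (v_exp v (fps_nth f 0)) * (fps_exp 1 oo (f - fps_const (fps_nth f 0)))
             = Amice phi) \<and>
         (\<forall>phi psi. v_continuous_on v (Zp v) phi \<and> v_continuous_on v (Zp v) psi \<and>
           fps_const (v_exp v (fps_nth f 0)) * (fps_exp 1 oo (f - fps_const (fps_nth f 0))) = Amice phi \<and>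
           fps_const (v_exp v (fps_nth f 0)) * (fps_exp 1 oo (f - fps_const (fps_nth f 0))) = Amice psi
           \<longrightarrow> (\<forall>x\<in>Zp v. phi x = psi x))"
proof -
  interpret cpv p v using Cp by unfold_locales
  define u where "u = f - fps_const (fps_nth f 0)"
  define w where "w = u - fps_X"
  define C where "C = fps_exp (1::'a) oo w"
  define e where "e = v_exp v (fps_nth f 0)"
  have u0: "u $ 0 = 0" by (simp add: u_def)
  have Esplit: "fps_exp 1 oo u = fps_exp 1 * C"
    unfolding C_def w_def by (rule exp_split[OF u0])
  define \<mu> where "\<mu> = max (1 / real p) (v (f $ 1 - 1))"
  have mup: "1 / real p \<le> \<mu>" by (simp add: \<mu>_def)
  have mu1': "\<mu> < 1" using U p_gt1 by (simp add: \<mu>_def)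
  then have mu1: "\<mu> \<le> 1" by simp
  have mu0: "0 \<le> \<mu>" using mup by (smt (verit) divide_nonneg_nonneg of_nat_0_le_iff)
  have w0: "w $ 0 = 0" by (simp add: w_def u_def)
  have w1: "v (w $ 1) \<le> \<mu>" by (simp add: w_def u_def \<mu>_def)
  have wj: "v (w $ j) \<le> 1" for j
  proof -
    consider "j = 0" | "j = 1" | "j \<ge> 2" by linarith
    then show ?thesis
    proof cases
      case 1 then show ?thesis by (simp add: w_def u_def)
    next
      case 2 then show ?thesis using U by (simp add: w_def u_def)
    next
      case 3 then show ?thesis using O by (simp add: w_def u_def)
    qed
  qed
  define c where "c k = fact k * C $ k" for k
  have cb: "v (c k) \<le> \<mu> ^ ((k div 2) div p)" for k
    unfolding c_def C_def by (rule v_c_bound[OF w0 w1 wj mup mu1])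
  have c1: "v (c k) \<le> 1" for k
    using cb[of k] power_le_one[OF mu0 mu1] order_trans by blast
  have c0: "\<exists>K. \<forall>k\<ge>K. v (c k) < \<epsilon>" if eps: "\<epsilon> > 0" for \<epsilon>
  proof -
    obtain n where n: "\<mu> ^ n < \<epsilon>" using real_arch_pow_inv[OF eps mu1'] by blast
    have "v (c k) < \<epsilon>" if k: "k \<ge> 2 * p * n" for k
    proof -
      have "(2 * (p * n)) div 2 \<le> k div 2" using k by (intro div_le_mono) (simp add: mult.assoc)
      then have "p * n \<le> k div 2" by simp
      then have "(p * n) div p \<le> (k div 2) div p" by (rule div_le_mono)
      then have "n \<le> (k div 2) div p" using p_gt1 by simp
      then have "\<mu> ^ ((k div 2) div p) \<le> \<mu> ^ n" using mu0 mu1 by (intro power_decreasing) auto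
      then show ?thesis using cb[of k] n by linarith
    qed
    then show ?thesis by blast
  qed
  define g where "g n = (\<Sum>k=0..n. of_nat (n choose k) * c k)" for n
  have gE: "g n = fact n * (fps_exp 1 oo u) $ n" for n
    unfolding g_def c_def Esplit by (rule E_coeff[symmetric])
  have ucg: "\<forall>\<epsilon>>0. \<exists>d>0. \<forall>n m. v (of_nat n - of_nat m :: 'a) < d \<longrightarrow> v (g n - g m) < \<epsilon>"
    unfolding g_def by (rule mahler_uc[OF c1 c0])
  define G where "G n = e * g n" for n
  have ucG: "\<forall>\<epsilon>>0. \<exists>d>0. \<forall>n m. v (of_nat n - of_nat m :: 'a) < d \<longrightarrow> v (G n - G m) < \<epsilon>"
  proof (intro allI impI)
    fix \<epsilon> :: real assume eps: "\<epsilon> > 0"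
    have eps': "\<epsilon> / (v e + 1) > 0" using eps v_nonneg[of e] by simp
    obtain d where d: "d > 0" "\<And>n m. v (of_nat n - of_nat m :: 'a) < d \<Longrightarrow> v (g n - g m) < \<epsilon> / (v e + 1)"
      using ucg eps' by blast
    have "v (G n - G m) < \<epsilon>" if "v (of_nat n - of_nat m :: 'a) < d" for n m
    proof -
      have "G n - G m = e * (g n - g m)" by (simp add: G_def algebra_simps)
      then have "v (G n - G m) = v e * v (g n - g m)" by (simp add: v_mult)
      also have "\<dots> \<le> v e * (\<epsilon> / (v e + 1))"
        using d(2)[OF that] v_nonneg[of e] by (intro mult_left_mono) auto
      also have "\<dots> < \<epsilon>"
      proof -
        have "v e * (\<epsilon> / (v e + 1)) = \<epsilon> * (v e / (v e + 1))" by simp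
        also have "\<dots> < \<epsilon> * 1" using eps v_nonneg[of e] by (intro mult_strict_left_mono) auto
        finally show ?thesis by simp
      qed
      finally show ?thesis .
    qed
    then show "\<exists>d>0. \<forall>n m. v (of_nat n - of_nat m :: 'a) < d \<longrightarrow> v (G n - G m) < \<epsilon>"
      using d(1) by blast
  qed
  obtain phi where phic: "v_continuous_on v (Zp v) phi" and phin: "\<And>n. phi (of_nat n) = G n"
    using extension[OF ucG] by blast
  have fne: "(fact n :: 'a) \<noteq> 0" for n by simp
  have "fps_const e * (fps_exp 1 oo u) = Amice phi"
  proof (rule fps_ext)
    fix n
    have "Amice phi $ n = G n / fact n" by (simp add: Amice_def phin)
    also have "\<dots> = e * (fps_exp 1 oo u) $ n" using fne[of n] by (simp add: G_def gE)
    finally show "(fps_const e * (fps_exp 1 oo u)) $ n = Amice phi $ n" by simp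
  qed
  then have ex: "\<exists>phi. v_continuous_on v (Zp v) phi \<and> fps_const e * (fps_exp 1 oo u) = Amice phi"
    using phic by blast
  have un: "\<forall>x\<in>Zp v. phi x = psi x"
    if "v_continuous_on v (Zp v) phi" "v_continuous_on v (Zp v) psi"
       "Amice phi = Amice psi" for phi psi
  proof
    fix x assume x: "x \<in> Zp v"
    have "phi (of_nat n) = psi (of_nat n)" for n
    proof -
      have "Amice phi $ n = Amice psi $ n" using that(3) by simp
      then have "phi (of_nat n) / fact n = psi (of_nat n) / fact n" by (simp add: Amice_def)
      then show ?thesis using fne[of n] by simp
    qed
    then show "phi x = psi x" by (rule unique_ext[OF that(1,2) _ x])
  qed
  show ?thesis
    using ex un unfolding e_def u_def by metis
qed

end
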